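(* Let $S$ be an irreducible numerical semigroup with Frobenius number $F$, and let $x$ be a minimal generator of $S$ such that: (1) $x<F$; (2) $2x-F\notin S$; (3) $3x\neq 2F$; (4) $4x\neq 3F$. Then $\overline{S}=(S\setminus\{x\})\cup\{F-x\}$ is an irreducible numerical semigroup with Frobenius number $F$.
   Context: A numerical semigroup is a subset $S\subseteq\mathbb{N}$ (with $\mathbb{N}$ the set of nonnegative integers) closed under addition, containing $0$, with $\mathbb{N}\setminus S$ finite. Its Frobenius number $\mathrm{F}(S)$ is the largest integer not in $S$. Every numerical semigroup has a unique minimal system of generators (a finite set $A$ with $S$ equal to the submonoid of $(\mathbb{N},+)$ generated by $A$, minimal with respect to inclusion); its elements are the minimal generators of $S$. A numerical semigroup is irreducible if it cannot be expressed as the intersection of two numerical semigroups properly containing it. *)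

theory Defs
  imports Main
begin

definition numerical_semigroup :: "nat set \<Rightarrow> bool" where
  "numerical_semigroup S \<longleftrightarrow> 0 \<in> S \<and> (\<forall>a\<in>S. \<forall>b\<in>S. a + b \<in> S) \<and> finite (UNIV - S)"

definition frobenius :: "nat set \<Rightarrow> int" where
  "frobenius S = (if S = UNIV then -1 else int (Max (UNIV - S)))"

inductive_set generated :: "nat set \<Rightarrow> nat set" for A where
  gen_zero: "0 \<in> generated A"
| gen_add: "a \<in> A \<Longrightarrow> s \<in> generated A \<Longrightarrow> a + s \<in> generated A"

definition minimal_system_of_generators :: "nat set \<Rightarrow> nat set \<Rightarrow> bool" where
  "minimal_system_of_generators S A \<longleftrightarrow>
     finite A \<and> generated A = S \<and> (\<forall>B. B \<subset> A \<longrightarrow> generated B \<noteq> S)"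

definition minimal_generator :: "nat set \<Rightarrow> nat \<Rightarrow> bool" where
  "minimal_generator S x \<longleftrightarrow> (\<exists>A. minimal_system_of_generators S A \<and> x \<in> A)"

definition irreducible_ns :: "nat set \<Rightarrow> bool" where
  "irreducible_ns S \<longleftrightarrow> numerical_semigroup S \<and>
     \<not> (\<exists>S1 S2. numerical_semigroup S1 \<and> numerical_semigroup S2 \<and>
            S \<subset> S1 \<and> S \<subset> S2 \<and> S = S1 \<inter> S2)"

end

theory Submission
  imports Defs
begin

lemma lt_gen: "n \<in> generated A \<Longrightarrow> n < x \<Longrightarrow> n \<in> generated (A - {x})"
  by (induction rule: generated.induct) (auto intro: generated.intros)

lemma gen_add_closed: "a \<in> generated A \<Longrightarrow> b \<in> generated A \<Longrightarrow> a + b \<in> generated A"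
  by (induction rule: generated.induct) (auto simp: add.assoc intro: generated.intros)

lemma gen_mono2: assumes "\<And>a. a \<in> A \<Longrightarrow> a \<in> generated B" shows "n \<in> generated A \<Longrightarrow> n \<in> generated B"
  by (induction rule: generated.induct) (auto intro: generated.intros gen_add_closed assms)

lemma gen_self: "a \<in> A \<Longrightarrow> a \<in> generated A"
  using generated.gen_add[OF _ generated.gen_zero] by fastforce

lemma gen_sub: "B \<subseteq> A \<Longrightarrow> generated B \<subseteq> generated A"
  using gen_mono2[of B A] gen_self by blast

lemma gen_drop0: "n \<in> generated A \<Longrightarrow> n \<in> generated (A - {0})"
proof (induction rule: generated.induct)
  case gen_zero then show ?case by (rule generated.gen_zero)
next
  case (gen_add a s)
  show ?case
  proof (cases "a = 0")
    case True then show ?thesis using gen_add.IH by simp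
  next
    case False then have "a \<in> A - {0}" using gen_add.hyps by simp
    then show ?thesis using gen_add.IH by (rule generated.gen_add)
  qed
qed

lemma mingen:
  assumes "minimal_generator S x"
  shows "x \<in> S" "x \<noteq> 0" "\<And>a b. a\<in>S \<Longrightarrow> b\<in>S \<Longrightarrow> a+b = x \<Longrightarrow> a = 0 \<or> b = 0"
proof -
  obtain A where A: "finite A" "generated A = S" "\<And>B. B \<subset> A \<Longrightarrow> generated B \<noteq> S" "x \<in> A"
    using assms unfolding minimal_generator_def minimal_system_of_generators_def by blast
  show "x \<in> S" using A(2,4) gen_self by blast
  show "x \<noteq> 0"
  proof
    assume x0: "x = 0"
    have "generated (A - {0}) = S"
    proof
      show "generated (A - {0}) \<subseteq> S" using A(2) gen_sub[of "A - {0}" A] by blast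
      show "S \<subseteq> generated (A - {0})" using A(2) gen_drop0 by blast
    qed
    moreover have "A - {0} \<subset> A" using A(4) x0 by blast
    ultimately show False using A(3) by blast
  qed
  fix a b assume ab: "a \<in> S" "b \<in> S" "a + b = x"
  show "a = 0 \<or> b = 0"
  proof (rule ccontr)
    assume "\<not> (a = 0 \<or> b = 0)"
    then have "a < x" "b < x" using ab by auto
    then have "a \<in> generated (A - {x})" "b \<in> generated (A - {x})"
      using lt_gen ab A(2) by auto
    then have xg: "x \<in> generated (A - {x})" using gen_add_closed ab(3) by blast
    have "generated (A - {x}) = S"
    proof
      show "generated (A - {x}) \<subseteq> S" using A(2) gen_sub[of "A - {x}" A] by blast
      have "\<And>c. c \<in> A \<Longrightarrow> c \<in> generated (A - {x})"
      proof -
        fix c assume "c \<in> A"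
        then show "c \<in> generated (A - {x})"
          using xg gen_self[of c "A - {x}"] by (cases "c = x") auto
      qed
      then show "S \<subseteq> generated (A - {x})"
        using A(2) gen_mono2[of A "A - {x}"] by blast
    qed
    moreover have "A - {x} \<subset> A" using A(4) by blast
    ultimately show False using A(3) by blast
  qed
qed

lemma ns_big:
  assumes "finite (UNIV - S)" "(y::nat) > Max (UNIV - S)" shows "y \<in> S"
  using assms Max_ge[of "UNIV - S" y] by (metis DiffI UNIV_I leD)

lemma irr_sym:
  assumes irr: "irreducible_ns S" and ne: "S \<noteq> UNIV" and h: "h \<notin> S"
    and h2: "2*h \<noteq> Max (UNIV - S)"
  shows "h \<le> Max (UNIV - S) \<and> Max (UNIV - S) - h \<in> S"
proof -
  define F where "F = Max (UNIV - S)"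
  have ns: "0 \<in> S" "\<And>a b. a \<in> S \<Longrightarrow> b \<in> S \<Longrightarrow> a + b \<in> S" "finite (UNIV - S)"
    using irr unfolding irreducible_ns_def numerical_semigroup_def by auto
  have big: "\<And>y. y > F \<Longrightarrow> y \<in> S" using ns_big[OF ns(3)] F_def by blast
  have le: "\<And>y. y \<notin> S \<Longrightarrow> y \<le> F" using big not_le by blast
  have FnS: "F \<notin> S" using Max_in[OF ns(3)] ne F_def by auto
  have hF: "h \<le> F" using le h by blast
  show ?thesis
  proof (rule ccontr)
    assume "\<not> ?thesis"
    then have hF': "F - h \<notin> S" using hF F_def by auto
    define M where "M = {y. y \<notin> S \<and> F - y \<notin> S \<and> 2*y \<noteq> F}"
    have finM: "finite M" using ns(3) by (rule rev_finite_subset) (auto simp: M_def)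
    have hM: "h \<in> M" using h hF' h2 F_def M_def by auto
    define h0 where "h0 = Max M"
    have h0M: "h0 \<in> M" using Max_in[OF finM] hM h0_def by blast
    have h0max: "\<And>y. y \<in> M \<Longrightarrow> y \<le> h0" using Max_ge[OF finM] h0_def by blast
    have h0F: "h0 \<le> F" using le h0M M_def by blast
    have "F - h0 \<in> M" using h0M h0F unfolding M_def by auto
    then have "F - h0 \<le> h0" using h0max by blast
    then have h0big: "2*h0 > F" using h0M M_def by auto
    have h0nS: "h0 \<notin> S" using h0M M_def by blast
    have h0neF: "h0 \<noteq> F" using h0M M_def ns(1) by auto
    have F0: "F > 0" using FnS ns(1) by (cases F) auto
    have ns1: "numerical_semigroup (S \<union> {h0})"
      unfolding numerical_semigroup_def
    proof (intro conjI ballI)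
      show "0 \<in> S \<union> {h0}" using ns by auto
      show "finite (UNIV - (S \<union> {h0}))" using ns(3) by (rule rev_finite_subset) auto
      have key: "\<And>b. b \<in> S \<Longrightarrow> h0 + b \<in> S \<union> {h0}"
      proof -
        fix b assume b: "b \<in> S"
        show "h0 + b \<in> S \<union> {h0}"
        proof (cases "b = 0")
          case False
          show ?thesis
          proof (rule ccontr)
            assume nn: "h0 + b \<notin> S \<union> {h0}"
            then have "h0 + b \<le> F" using le by blast
            have "F - (h0 + b) \<notin> S"
            proof
              assume "F - (h0 + b) \<in> S"
              then have "F - (h0 + b) + b \<in> S" using ns(2) b by blast
              moreover have "F - (h0 + b) + b = F - h0" using \<open>h0 + b \<le> F\<close> by simp
              ultimately show False using h0M M_def by auto
            qed
            then have "h0 + b \<in> M" using nn h0big unfolding M_def by auto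
            then show False using h0max False by fastforce
          qed
        qed simp
      qed
      fix a b assume a: "a \<in> S \<union> {h0}" and b: "b \<in> S \<union> {h0}"
      show "a + b \<in> S \<union> {h0}"
      proof (cases "a \<in> S")
        case True
        show ?thesis
        proof (cases "b \<in> S")
          case True then show ?thesis using ns(2) \<open>a \<in> S\<close> by blast
        next
          case False then have "b = h0" using b by blast
          then show ?thesis using key[OF \<open>a \<in> S\<close>] by (simp add: add.commute)
        qed
      next
        case False then have a0: "a = h0" using a by blast
        show ?thesis
        proof (cases "b \<in> S")
          case True then show ?thesis using key a0 by blast
        next
          case False then have "b = h0" using b by blast
          then show ?thesis using a0 big h0big by auto
        qed
      qed
    qed
    have ns2: "numerical_semigroup (S \<union> {F})"
      unfolding numerical_semigroup_def
    proof (intro conjI ballI)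
      show "0 \<in> S \<union> {F}" using ns by auto
      show "finite (UNIV - (S \<union> {F}))" using ns(3) by (rule rev_finite_subset) auto
      fix a b assume a: "a \<in> S \<union> {F}" and b: "b \<in> S \<union> {F}"
      show "a + b \<in> S \<union> {F}"
      proof (cases "a = 0 \<or> b = 0")
        case True then show ?thesis using a b by auto
      next
        case False
        then show ?thesis using a b ns(2) big F0 by auto
      qed
    qed
    have "S \<subset> S \<union> {h0}" "S \<subset> S \<union> {F}" using h0nS FnS by auto
    moreover have "S = (S \<union> {h0}) \<inter> (S \<union> {F})" using h0neF by auto
    ultimately show False using irr ns1 ns2 unfolding irreducible_ns_def by blast
  qed
qed

lemma sym_irr_aux:
  assumes "numerical_semigroup T1" "T \<subset> T1" "F \<notin> T1"
    and "\<forall>h. h \<notin> T \<longrightarrow> 2*h \<noteq> F \<longrightarrow> F - h \<in> T \<and> h \<le> F"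
  shows False
proof -
  obtain h where h: "h \<in> T1" "h \<notin> T" using assms(2) by blast
  have cl: "\<And>a b. a \<in> T1 \<Longrightarrow> b \<in> T1 \<Longrightarrow> a + b \<in> T1"
    using assms(1) unfolding numerical_semigroup_def by blast
  show False
  proof (cases "2*h = F")
    case True then show ?thesis using cl[OF h(1) h(1)] assms(3) by (simp add: mult_2)
  next
    case False
    then have "F - h \<in> T1" "h \<le> F" using assms(4) h(2) assms(2) by auto
    then show ?thesis using cl[OF h(1)] assms(3) by fastforce
  qed
qed

lemma sym_irr:
  assumes "numerical_semigroup T" "F \<notin> T"
    and "\<forall>h. h \<notin> T \<longrightarrow> 2*h \<noteq> F \<longrightarrow> F - h \<in> T \<and> h \<le> F"
  shows "irreducible_ns T"
  unfolding irreducible_ns_def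
proof (intro conjI notI)
  show "numerical_semigroup T" by fact
  assume "\<exists>S1 S2. numerical_semigroup S1 \<and> numerical_semigroup S2 \<and>
            T \<subset> S1 \<and> T \<subset> S2 \<and> T = S1 \<inter> S2"
  then obtain S1 S2 where "numerical_semigroup S1" "numerical_semigroup S2"
    "T \<subset> S1" "T \<subset> S2" "T = S1 \<inter> S2" by blast
  then show False using sym_irr_aux[of S1 T F] sym_irr_aux[of S2 T F] assms by blast
qed

theorem proposition5:
  fixes S :: "nat set" and x :: nat
  assumes "irreducible_ns S"
    and "minimal_generator S x"
    and "int x < frobenius S"
    and "\<not> (\<exists>s\<in>S. int s = 2 * int x - frobenius S)"
    and "3 * int x \<noteq> 2 * frobenius S"
    and "4 * int x \<noteq> 3 * frobenius S"
  shows "irreducible_ns ((S - {x}) \<union> {nat (frobenius S - int x)})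
       \<and> frobenius ((S - {x}) \<union> {nat (frobenius S - int x)}) = frobenius S"
proof -
  note irr = assms(1)
  have ns: "0 \<in> S" "\<And>a b. a \<in> S \<Longrightarrow> b \<in> S \<Longrightarrow> a + b \<in> S" "finite (UNIV - S)"
    using irr unfolding irreducible_ns_def numerical_semigroup_def by auto
  have ne: "S \<noteq> UNIV" using assms(3) unfolding frobenius_def by auto
  define F where "F = Max (UNIV - S)"
  have frS: "frobenius S = int F" using ne F_def frobenius_def by simp
  have xF: "x < F" using assms(3) frS by simp
  have c2: "\<And>s. s \<in> S \<Longrightarrow> s + F \<noteq> 2*x" using assms(4) frS by force
  have c3: "3*x \<noteq> 2*F" using assms(5) frS by linarith
  have c4: "4*x \<noteq> 3*F" using assms(6) frS by linarith
  define f where "f = F - x"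
  have nf: "nat (frobenius S - int x) = f" using frS xF f_def by simp
  have xS: "x \<in> S" and x0: "x \<noteq> 0" and xirr: "\<And>a b. a\<in>S \<Longrightarrow> b\<in>S \<Longrightarrow> a+b = x \<Longrightarrow> a = 0 \<or> b = 0"
    using mingen[OF assms(2)] by auto
  have big: "\<And>y. y > F \<Longrightarrow> y \<in> S" using ns_big[OF ns(3)] F_def by blast
  have le: "\<And>y. y \<notin> S \<Longrightarrow> y \<le> F" using big not_le by blast
  have FnS: "F \<notin> S" using Max_in[OF ns(3)] ne F_def by auto
  have sym: "\<And>h. h \<notin> S \<Longrightarrow> 2*h \<noteq> F \<Longrightarrow> h \<le> F \<and> F - h \<in> S"
    using irr_sym[OF irr ne] F_def by blast
  have fnS: "f \<notin> S"
  proof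
    assume "f \<in> S" then have "f + x \<in> S" using ns(2) xS by blast
    then show False using FnS xF f_def by simp
  qed
  have fx: "f \<noteq> x" using c2[OF ns(1)] f_def xF by auto
  define S' where "S' = (S - {x}) \<union> {f}"
  have ns': "numerical_semigroup S'"
    unfolding numerical_semigroup_def
  proof (intro conjI ballI)
    show "0 \<in> S'" using ns x0 S'_def by auto
    show "finite (UNIV - S')"
    proof (rule finite_subset)
      show "UNIV - S' \<subseteq> insert x (UNIV - S)" by (auto simp: S'_def)
      show "finite (insert x (UNIV - S))" using ns(3) by simp
    qed
    have keyS: "\<And>a b. a \<in> S - {x} \<Longrightarrow> b \<in> S - {x} \<Longrightarrow> a + b \<in> S'"
    proof -
      fix a b assume "a \<in> S - {x}" "b \<in> S - {x}"
      then show "a + b \<in> S'" using ns(2) xirr[of a b] S'_def by auto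
    qed
    have keyf: "\<And>b. b \<in> S - {x} \<Longrightarrow> f + b \<in> S'"
    proof -
      fix b assume b: "b \<in> S - {x}"
      show "f + b \<in> S'"
      proof (cases "b = 0")
        case True then show ?thesis using S'_def by simp
      next
        case False
        have "f + b \<in> S"
        proof (rule ccontr)
          assume nn: "f + b \<notin> S"
          show False
          proof (cases "2*(f+b) = F")
            case True
            then have "(b+b) + F = 2*x" using f_def xF by simp
            then show False using c2 ns(2) b by blast
          next
            case False
            then have "f + b \<le> F" "F - (f + b) \<in> S" using sym nn by auto
            moreover have "F - (f + b) = x - b" "b \<le> x" using \<open>f + b \<le> F\<close> f_def xF by auto
            ultimately have "b + (x - b) = x" "x - b \<in> S" by auto
            then show False using xirr[of b "x - b"] b \<open>b \<noteq> 0\<close> \<open>b \<le> x\<close> by auto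
          qed
        qed
        moreover have "f + b \<noteq> x" using c2[of b] b f_def xF by auto
        ultimately show ?thesis using S'_def by simp
      qed
    qed
    have keyff: "f + f \<in> S'"
    proof -
      have "f + f \<in> S"
      proof (rule ccontr)
        assume nn: "f + f \<notin> S"
        have "2*(f+f) \<noteq> F" using c4 f_def xF by auto
        then have "f + f \<le> F" "F - (f + f) \<in> S" using sym nn by auto
        moreover have "F - (f + f) + F = 2*x" using \<open>f + f \<le> F\<close> f_def xF by auto
        ultimately show False using c2 by blast
      qed
      moreover have "f + f \<noteq> x" using c3 f_def xF by auto
      ultimately show ?thesis using S'_def by simp
    qed
    fix a b assume a: "a \<in> S'" and b: "b \<in> S'"
    show "a + b \<in> S'"
    proof (cases "a = f")
      case True
      then show ?thesis using b keyf keyff S'_def by auto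
    next
      case False
      then have aS: "a \<in> S - {x}" using a S'_def by auto
      show ?thesis
      proof (cases "b = f")
        case True then show ?thesis using keyf[OF aS] by (simp add: add.commute)
      next
        case False then have "b \<in> S - {x}" using b S'_def by auto
        then show ?thesis using keyS aS by blast
      qed
    qed
  qed
  have FnS': "F \<notin> S'" using FnS x0 f_def xF S'_def by auto
  have le': "\<And>y. y \<notin> S' \<Longrightarrow> y \<le> F" using le xF S'_def by auto
  have fr': "frobenius S' = int F"
  proof -
    have "S' \<noteq> UNIV" using FnS' by blast
    moreover have "Max (UNIV - S') = F"
      by (rule Max_eqI) (use ns' FnS' le' in \<open>auto simp: numerical_semigroup_def\<close>)
    ultimately show ?thesis unfolding frobenius_def by simp
  qed
  have irr': "irreducible_ns S'"
  proof (rule sym_irr[OF ns' FnS'], intro allI impI)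
    fix h assume h: "h \<notin> S'" "2*h \<noteq> F"
    show "F - h \<in> S' \<and> h \<le> F"
    proof (cases "h = x")
      case True then show ?thesis using f_def xF S'_def by auto
    next
      case False
      then have "h \<notin> S" "h \<noteq> f" using h S'_def by auto
      then have "h \<le> F" "F - h \<in> S" using sym h(2) by auto
      moreover have "F - h \<noteq> x" using \<open>h \<le> F\<close> \<open>h \<noteq> f\<close> f_def by auto
      ultimately show ?thesis using S'_def by auto
    qed
  qed
  show ?thesis using irr' fr' frS nf S'_def by simp
qed

end
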